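(* Let $G=(V,E,L)$ be a parity graph with priorities in an index $I$, started from a vertex $p_0$. If $G$ is not even, then for every index $J$ with $\min(J)\in\{1,2\}$ and every $N\in\mathbb{N}$, Adam wins the priority transduction game $\mathrm{Reg}^J_N(G)$.
   Context: An index is a nonempty finite interval of $\mathbb{N}$. A sequence of priorities is parity accepting if its $\limsup$ is even. A parity graph is $(V,E,L)$ with $V$ countable, $E\subseteq V\times V$ (every vertex having an outgoing edge), $L:E\to I$; it is even if every infinite path from the start vertex has parity accepting priority sequence. Priority transduction game $\mathrm{Reg}^J_N(G)$: configurations consist of a current vertex, registers $r_j\in I$ for each $j$ with $2j\in J$ (plus $r_0$ if $1\in J$), and counters $c_{i,j}\in\mathbb{N}$ for odd $i\in I$ and register indices $j$. Initially the vertex is $p_0$, counters are $0$, registers are $\min(I)$. At each step: (a) Adam chooses an outgoing edge $e$ and the vertex is updated; (b) Eve chooses a register $r_j$; (c) output $w$: $w=1$ if $j=0$; else $w=2j$ if $r_j$ is even; else if $c_{r_j,j}=N$ then $w=2j+1$, $c_{r_j,j}:=0$, and Eve loses immediately if $2j+1\notin J$; else $w=2j$ and $c_{r_j,j}:=c_{r_j,j}+1$; (d) if $L(e)$ is even, $i:=L(e)$, else Eve chooses an odd $i\in I$ with $i\ge L(e)$; then $c_{i',j}:=0$ for all $i'<i$, $c_{r_j,j'}:=0$ for all $j'<j$, $r_{j'}:=\max(i,r_{j'})$ for all $j'>j$, and $r_j:=i$. Eve wins iff she never loses immediately and the output sequence is parity accepting; otherwise Adam wins. *)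

theory Defs
  imports Main "HOL-Library.Countable_Set" "HOL-Library.Extended_Nat" "HOL-Library.Liminf_Limsup"
begin

definition is_index :: "nat set \<Rightarrow> bool" where
  "is_index I \<longleftrightarrow> I \<noteq> {} \<and> finite I \<and>
     (\<forall>x y z. x \<in> I \<longrightarrow> z \<in> I \<longrightarrow> x \<le> y \<longrightarrow> y \<le> z \<longrightarrow> y \<in> I)"

definition parity_accepting :: "(nat \<Rightarrow> nat) \<Rightarrow> bool" where
  "parity_accepting w \<longleftrightarrow> (\<exists>m. limsup (\<lambda>n. enat (w n)) = enat m \<and> even m)"

definition parity_graph :: "'v set \<Rightarrow> ('v \<times> 'v) set \<Rightarrow> ('v \<times> 'v \<Rightarrow> nat) \<Rightarrow> nat set \<Rightarrow> bool" where
  "parity_graph V E L I \<longleftrightarrow> countable V \<and> E \<subseteq> V \<times> V \<and>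
     (\<forall>v\<in>V. \<exists>u. (v, u) \<in> E) \<and> is_index I \<and> (\<forall>e\<in>E. L e \<in> I)"

definition infinite_path_from :: "('v \<times> 'v) set \<Rightarrow> 'v \<Rightarrow> (nat \<Rightarrow> 'v) \<Rightarrow> bool" where
  "infinite_path_from E p0 \<rho> \<longleftrightarrow> \<rho> 0 = p0 \<and> (\<forall>n. (\<rho> n, \<rho> (Suc n)) \<in> E)"

definition even_graph :: "('v \<times> 'v) set \<Rightarrow> ('v \<times> 'v \<Rightarrow> nat) \<Rightarrow> 'v \<Rightarrow> bool" where
  "even_graph E L p0 \<longleftrightarrow>
     (\<forall>\<rho>. infinite_path_from E p0 \<rho> \<longrightarrow> parity_accepting (\<lambda>n. L (\<rho> n, \<rho> (Suc n))))"

text \<open>Only registers with index in reg_indices J and counters c_(i,j) with i odd in I and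
  j a register index are meaningful; the others are carried along but never influence play.\<close>
record 'v config =
  vert :: 'v
  reg :: "nat \<Rightarrow> nat"
  cnt :: "nat \<times> nat \<Rightarrow> nat"

definition reg_indices :: "nat set \<Rightarrow> nat set" where
  "reg_indices J = {j. 2 * j \<in> J} \<union> (if 1 \<in> J then {0} else {})"

definition init_config :: "nat set \<Rightarrow> 'v \<Rightarrow> 'v config" where
  "init_config I p0 = \<lparr>vert = p0, reg = (\<lambda>_. Min I), cnt = (\<lambda>_. 0)\<rparr>"

text \<open>A round: Adam's edge e, Eve's register choice j, Eve's priority choice i
  (the latter only used when L e is odd).\<close>
type_synonym 'v round = "('v \<times> 'v) \<times> nat \<times> nat"

definition out :: "nat \<Rightarrow> 'v config \<Rightarrow> nat \<Rightarrow> nat" where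
  "out N cf j =
     (if j = 0 then 1
      else if even (reg cf j) then 2 * j
      else if cnt cf (reg cf j, j) = N then 2 * j + 1
      else 2 * j)"

definition loses_now :: "nat set \<Rightarrow> nat \<Rightarrow> 'v config \<Rightarrow> nat \<Rightarrow> bool" where
  "loses_now J N cf j \<longleftrightarrow>
     j \<noteq> 0 \<and> odd (reg cf j) \<and> cnt cf (reg cf j, j) = N \<and> 2 * j + 1 \<notin> J"

definition eff_prio :: "('v \<times> 'v \<Rightarrow> nat) \<Rightarrow> 'v \<times> 'v \<Rightarrow> nat \<Rightarrow> nat" where
  "eff_prio L e i = (if even (L e) then L e else i)"

definition eve_legal :: "nat set \<Rightarrow> nat set \<Rightarrow> ('v \<times> 'v \<Rightarrow> nat) \<Rightarrow> 'v \<times> 'v \<Rightarrow> nat \<Rightarrow> nat \<Rightarrow> bool" where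
  "eve_legal I J L e j i \<longleftrightarrow> j \<in> reg_indices J \<and>
     (odd (L e) \<longrightarrow> i \<in> I \<and> odd i \<and> L e \<le> i)"

definition adam_legal :: "('v \<times> 'v) set \<Rightarrow> 'v config \<Rightarrow> 'v \<times> 'v \<Rightarrow> bool" where
  "adam_legal E cf e \<longleftrightarrow> e \<in> E \<and> fst e = vert cf"

text \<open>One full round (a)-(d). The counter update of step (c) is applied first, then
  the resets and register updates of step (d), using the value of r_j before step (d).\<close>
definition step :: "nat \<Rightarrow> ('v \<times> 'v \<Rightarrow> nat) \<Rightarrow> 'v config \<Rightarrow> 'v round \<Rightarrow> 'v config" where
  "step N L cf rd = (case rd of (e, j, ich) \<Rightarrow>
     let r = reg cf; c = cnt cf;
         c1 = (if j \<noteq> 0 \<and> odd (r j)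
               then (if c (r j, j) = N then c((r j, j) := 0) else c((r j, j) := c (r j, j) + 1))
               else c);
         i = eff_prio L e ich;
         c2 = (\<lambda>(a, b). if b = j \<and> a < i then 0
                        else if a = r j \<and> b < j then 0
                        else c1 (a, b));
         r2 = (\<lambda>k. if k = j then i else if j < k then max i (r k) else r k)
     in \<lparr>vert = snd e, reg = r2, cnt = c2\<rparr>)"

definition conf_after :: "nat set \<Rightarrow> nat \<Rightarrow> ('v \<times> 'v \<Rightarrow> nat) \<Rightarrow> 'v \<Rightarrow> 'v round list \<Rightarrow> 'v config" where
  "conf_after I N L p0 h = foldl (step N L) (init_config I p0) h"

type_synonym 'v adam_strategy = "'v round list \<Rightarrow> 'v \<times> 'v"
type_synonym 'v eve_strategy = "'v round list \<Rightarrow> 'v \<times> 'v \<Rightarrow> nat \<times> nat"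

definition next_round :: "'v adam_strategy \<Rightarrow> 'v eve_strategy \<Rightarrow> 'v round list \<Rightarrow> 'v round" where
  "next_round sa se h = (let e = sa h in (e, se h e))"

primrec hist :: "'v adam_strategy \<Rightarrow> 'v eve_strategy \<Rightarrow> nat \<Rightarrow> 'v round list" where
  "hist sa se 0 = []"
| "hist sa se (Suc n) = hist sa se n @ [next_round sa se (hist sa se n)]"

definition play_round :: "'v adam_strategy \<Rightarrow> 'v eve_strategy \<Rightarrow> nat \<Rightarrow> 'v round" where
  "play_round sa se n = next_round sa se (hist sa se n)"

definition adam_plays_legally ::
  "nat set \<Rightarrow> nat \<Rightarrow> ('v \<times> 'v) set \<Rightarrow> ('v \<times> 'v \<Rightarrow> nat) \<Rightarrow> 'v \<Rightarrow> 'v adam_strategy \<Rightarrow> 'v eve_strategy \<Rightarrow> bool" where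
  "adam_plays_legally I N E L p0 sa se \<longleftrightarrow>
     (\<forall>n. adam_legal E (conf_after I N L p0 (hist sa se n)) (fst (play_round sa se n)))"

definition eve_wins_play ::
  "nat set \<Rightarrow> nat set \<Rightarrow> nat \<Rightarrow> ('v \<times> 'v \<Rightarrow> nat) \<Rightarrow> 'v \<Rightarrow> 'v adam_strategy \<Rightarrow> 'v eve_strategy \<Rightarrow> bool" where
  "eve_wins_play I J N L p0 sa se \<longleftrightarrow>
     (\<forall>n. case play_round sa se n of (e, j, i) \<Rightarrow>
            eve_legal I J L e j i \<and>
            \<not> loses_now J N (conf_after I N L p0 (hist sa se n)) j) \<and>
     parity_accepting (\<lambda>n. case play_round sa se n of (e, j, i) \<Rightarrow>
                              out N (conf_after I N L p0 (hist sa se n)) j)"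

definition adam_wins ::
  "nat set \<Rightarrow> nat set \<Rightarrow> nat \<Rightarrow> ('v \<times> 'v) set \<Rightarrow> ('v \<times> 'v \<Rightarrow> nat) \<Rightarrow> 'v \<Rightarrow> bool" where
  "adam_wins I J N E L p0 \<longleftrightarrow>
     (\<exists>sa. \<forall>se. adam_plays_legally I N E L p0 sa se \<and> \<not> eve_wins_play I J N L p0 sa se)"

end

theory Submission imports Defs begin

lemma limsup_char:
  fixes w :: "nat \<Rightarrow> nat"
  assumes "\<forall>n\<ge>T. w n \<le> m" "\<forall>k. \<exists>n\<ge>k. w n = m"
  shows "limsup (\<lambda>n. enat (w n)) = enat m"
  unfolding limsup_INF_SUP
proof (rule antisym)
  have "(SUP k\<in>{T..}. enat (w k)) \<le> enat m"
    using assms(1) by (intro SUP_least) auto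
  then show "(INF n. SUP k\<in>{n..}. enat (w k)) \<le> enat m"
    by (meson INF_lower2 UNIV_I)
next
  show "enat m \<le> (INF n. SUP k\<in>{n..}. enat (w k))"
  proof (rule INF_greatest)
    fix n
    obtain k where "k \<ge> n" "w k = m" using assms(2) by blast
    then show "enat m \<le> (SUP k\<in>{n..}. enat (w k))"
      by (metis SUP_upper atLeast_iff)
  qed
qed

lemma fin_ev:
  assumes "finite A" "\<forall>x\<in>A. \<exists>T. \<forall>n\<ge>T. P x (n::nat)"
  shows "\<exists>T. \<forall>x\<in>A. \<forall>n\<ge>T. P x n"
  using assms
proof (induction A rule: finite_induct)
  case empty then show ?case by auto
next
  case (insert a A)
  then obtain T1 where "\<forall>x\<in>A. \<forall>n\<ge>T1. P x n" by auto
  moreover obtain T2 where "\<forall>n\<ge>T2. P a n" using insert by auto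
  ultimately show ?case by (intro exI[of _ "max T1 T2"]) auto
qed

lemma pigeon:
  assumes "finite A" "\<forall>k. \<exists>n\<ge>k. Q n \<and> f n \<in> A"
  shows "\<exists>x\<in>A. \<forall>k. \<exists>n\<ge>k. Q n \<and> f (n::nat) = x"
proof (rule ccontr)
  assume "\<not> ?thesis"
  then have "\<forall>x\<in>A. \<exists>T. \<forall>n\<ge>T. \<not> (Q n \<and> f n = x)" by (metis leI)
  from fin_ev[OF assms(1) this] obtain T where "\<forall>x\<in>A. \<forall>n\<ge>T. \<not> (Q n \<and> f n = x)" by blast
  moreover obtain n where "n \<ge> T" "Q n" "f n \<in> A" using assms(2) by blast
  ultimately show False by blast
qed

lemma max_io:
  fixes w :: "nat \<Rightarrow> nat"
  assumes "finite A" "\<forall>n. w n \<in> A"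
  shows "\<exists>m. (\<exists>T. \<forall>n\<ge>T. w n \<le> m) \<and> (\<forall>k. \<exists>n\<ge>k. w n = m)"
proof -
  define S where "S = {x\<in>A. \<forall>k. \<exists>n\<ge>k. w n = x}"
  have "\<exists>x\<in>A. \<forall>k. \<exists>n\<ge>k. True \<and> w n = x"
    using assms by (intro pigeon) auto
  then have ne: "S \<noteq> {}" unfolding S_def by auto
  have fS: "finite S" using assms(1) unfolding S_def by auto
  define m where "m = Max S"
  have mS: "m \<in> S" using ne fS m_def by auto
  have "\<forall>x\<in>{x\<in>A. m < x}. \<exists>T. \<forall>n\<ge>T. w n \<noteq> x"
  proof
    fix x assume x: "x \<in> {x\<in>A. m < x}"
    then have "x \<notin> S" using fS m_def Max_ge by fastforce
    then show "\<exists>T. \<forall>n\<ge>T. w n \<noteq> x" using x unfolding S_def by auto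
  qed
  from fin_ev[OF _ this] assms(1) obtain T where "\<forall>x\<in>{x\<in>A. m < x}. \<forall>n\<ge>T. w n \<noteq> x" by auto
  then have "\<forall>n\<ge>T. w n \<le> m" using assms(2) by (metis (mono_tags, lifting) mem_Collect_eq not_le)
  moreover have "\<forall>k. \<exists>n\<ge>k. w n = m" using mS unfolding S_def by auto
  ultimately show ?thesis by blast
qed

lemma reg_step: "reg (step N L cf (e,j,ich)) = (\<lambda>k. if k = j then eff_prio L e ich else if j < k then max (eff_prio L e ich) (reg cf k) else reg cf k)"
  by (simp add: step_def Let_def)
lemma vert_step: "vert (step N L cf (e,j,ich)) = snd e"
  by (simp add: step_def Let_def)
lemma cnt_step: "cnt (step N L cf (e,j,ich)) (a,b) = (if b = j \<and> a < eff_prio L e ich then 0 else if a = reg cf j \<and> b < j then 0 else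
   (if j \<noteq> 0 \<and> odd (reg cf j) then (if cnt cf (reg cf j, j) = N then (cnt cf)((reg cf j, j) := 0) else (cnt cf)((reg cf j,j) := cnt cf (reg cf j, j) + 1)) else cnt cf) (a,b))"
  by (simp add: step_def Let_def)


lemma core:
  fixes cf :: "nat \<Rightarrow> 'v config" and e :: "nat \<Rightarrow> 'v \<times> 'v" and j i :: "nat \<Rightarrow> nat"
  assumes stp: "\<And>n. cf (Suc n) = step N L (cf n) (e n, j n, i n)"
    and init: "reg (cf 0) = (\<lambda>_. Min I)" "cnt (cf 0) = (\<lambda>_. 0)"
    and finI: "finite I" "I \<noteq> {}"
    and Le: "\<And>n. L (e n) \<in> I"
    and legal: "\<And>n. eve_legal I J L (e n) (j n) (i n)"
    and finJ: "finite J"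
    and dodd: "odd d" and dT: "\<forall>n\<ge>T. L (e n) \<le> d" and dio: "\<forall>k. \<exists>n\<ge>k. L (e n) = d"
  shows "\<not> parity_accepting (\<lambda>n. out N (cf n) (j n))"
proof -
  define ip where "ip n = eff_prio L (e n) (i n)" for n
  have regS: "reg (cf (Suc n)) k = (if k = j n then ip n else if j n < k then max (ip n) (reg (cf n) k) else reg (cf n) k)" for n k
    using stp[of n] by (simp add: reg_step ip_def)
  have cntS: "cnt (cf (Suc n)) (a,b) = (if b = j n \<and> a < ip n then 0 else if a = reg (cf n) (j n) \<and> b < j n then 0 else
   (if j n \<noteq> 0 \<and> odd (reg (cf n) (j n)) then (if cnt (cf n) (reg (cf n) (j n), j n) = N then (cnt (cf n))((reg (cf n) (j n), j n) := 0) else (cnt (cf n))((reg (cf n) (j n), j n) := cnt (cf n) (reg (cf n) (j n), j n) + 1)) else cnt (cf n)) (a,b))" for n a b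
    using stp[of n] by (simp add: cnt_step ip_def)
  have ipI: "ip n \<in> I" for n using Le[of n] legal[of n] by (auto simp: ip_def eff_prio_def eve_legal_def)
  have ipge: "L (e n) \<le> ip n" for n using legal[of n] by (auto simp: ip_def eff_prio_def eve_legal_def)
  have ipodd: "odd (L (e n)) \<Longrightarrow> odd (ip n)" for n using legal[of n] by (auto simp: ip_def eff_prio_def eve_legal_def)
  have ipeven: "even (ip n) \<Longrightarrow> ip n = L (e n)" for n using legal[of n] by (auto simp: ip_def eff_prio_def eve_legal_def)
  have ipsmall: "n \<ge> T \<Longrightarrow> even (ip n) \<Longrightarrow> ip n < d" for n
    using ipeven[of n] dT dodd by (metis le_neq_implies_less)
  have regI: "reg (cf n) k \<in> I" for n k
  proof (induction n arbitrary: k)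
    case 0 then show ?case using init finI by auto
  next
    case (Suc n) then show ?case using ipI[of n] by (auto simp: regS max_def)
  qed
  have cntle: "cnt (cf n) x \<le> N" for n x
  proof (induction n arbitrary: x)
    case 0 then show ?case using init by auto
  next
    case (Suc n)
    have "cnt (cf n) y \<le> N" for y using Suc .
    moreover have aux: "c \<le> N \<Longrightarrow> c \<noteq> N \<Longrightarrow> Suc c \<le> N" for c by auto
    ultimately show ?case by (cases x) (auto simp: cntS intro!: aux)
  qed
  have finR: "finite (reg_indices J)"
  proof -
    have "{j. 2 * j \<in> J} = (\<lambda>j. 2 * j) -` J" by auto
    moreover have "finite ((\<lambda>j::nat. 2 * j) -` J)" using finJ by (intro finite_vimageI) (auto simp: inj_on_def)
    ultimately show ?thesis unfolding reg_indices_def by auto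
  qed
  have jR: "\<forall>n. j n \<in> reg_indices J" using legal by (auto simp: eve_legal_def)
  obtain jm T' where jT: "\<forall>n\<ge>T'. j n \<le> jm" and jio: "\<forall>k. \<exists>n\<ge>k. j n = jm"
    using max_io[OF finR jR] by blast
  show ?thesis
  proof (cases "jm = 0")
    case True
    have "limsup (\<lambda>n. enat (out N (cf n) (j n))) = enat 1"
      using jT jio True by (intro limsup_char[where T=T']) (auto simp: out_def)
    then show ?thesis unfolding parity_accepting_def by auto
  next
    case jm0: False
    define R where "R n = reg (cf n) jm" for n
    define T0 where "T0 = max T T'"
    have RS_eq: "j n = jm \<Longrightarrow> R (Suc n) = ip n" for n by (simp add: R_def regS)
    have RS_lt: "n \<ge> T' \<Longrightarrow> j n \<noteq> jm \<Longrightarrow> R (Suc n) = max (ip n) (R n)" for n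
      using jT[rule_format, of n] by (simp add: R_def regS)
    obtain t1 where t1: "t1 \<ge> T0" "j t1 = jm" using jio by blast
    have P: "odd (R n) \<or> R n < d" if "n \<ge> Suc t1" for n
      using that
    proof (induction n rule: dec_induct)
      case base then show ?case using RS_eq[OF t1(2)] ipsmall[of t1] t1 T0_def by auto
    next
      case (step n)
      then have nT: "n \<ge> T" "n \<ge> T'" using t1 T0_def by auto
      show ?case
      proof (cases "j n = jm")
        case True then show ?thesis using RS_eq ipsmall nT by auto
      next
        case False then show ?thesis using RS_lt[OF nT(2) False] ipsmall[OF nT(1)] step.IH
          by (auto simp: max_def)
      qed
    qed
    have propS: "odd (R (Suc n)) \<and> R (Suc n) \<ge> \<theta>"
      if "n \<ge> T0" "odd (R n)" "R n \<ge> \<theta>" "\<theta> \<ge> d" "j n \<noteq> jm" for n \<theta>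
    proof -
      have nT: "n \<ge> T" "n \<ge> T'" using that T0_def by auto
      show ?thesis using RS_lt[OF nT(2) that(5)] ipsmall[OF nT(1)] that by (auto simp: max_def)
    qed
    have propag: "\<exists>m\<ge>n. j m = jm \<and> odd (R m) \<and> R m \<ge> \<theta>"
      if "n \<ge> T0" "odd (R n)" "R n \<ge> \<theta>" "\<theta> \<ge> d" for n \<theta>
    proof (rule ccontr)
      assume nex: "\<not> ?thesis"
      have "odd (R k) \<and> R k \<ge> \<theta> \<and> j k \<noteq> jm" if "k \<ge> n" for k
        using that
      proof (induction k rule: dec_induct)
        case base then show ?case using nex \<open>odd (R n)\<close> \<open>R n \<ge> \<theta>\<close> by auto
      next
        case (step k)
        then have "odd (R (Suc k)) \<and> R (Suc k) \<ge> \<theta>" using propS[of k \<theta>] \<open>n \<ge> T0\<close> \<open>\<theta> \<ge> d\<close> by auto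
        then show ?case using nex step by auto
      qed
      moreover obtain k where "k \<ge> n" "j k = jm" using jio by blast
      ultimately show False by auto
    qed
    have Cio: "\<forall>k. \<exists>n\<ge>k. j n = jm \<and> odd (R n) \<and> R n \<ge> d"
    proof
      fix k
      obtain n where n: "n \<ge> max k (Suc t1)" "L (e n) = d" using dio by blast
      have nT: "n \<ge> T" "n \<ge> T'" "n \<ge> T0" using n t1 T0_def by auto
      have ipn: "odd (ip n)" "ip n \<ge> d" using ipodd[of n] ipge[of n] n dodd by auto
      have "odd (R (Suc n)) \<and> R (Suc n) \<ge> d"
      proof (cases "j n = jm")
        case True then show ?thesis using RS_eq ipn by auto
      next
        case False
        have "odd (R n) \<or> R n < d" using P n by auto
        then show ?thesis using RS_lt[OF nT(2) False] ipn by (auto simp: max_def)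
      qed
      then obtain m where "m \<ge> Suc n" "j m = jm" "odd (R m)" "R m \<ge> d"
        using propag[of "Suc n" d] nT by auto
      then show "\<exists>n\<ge>k. j n = jm \<and> odd (R n) \<and> R n \<ge> d" using n by (intro exI[of _ m]) auto
    qed
    define Ob where "Ob = {x\<in>I. odd x \<and> d \<le> x \<and> (\<forall>k. \<exists>n\<ge>k. j n = jm \<and> R n = x)}"
    have "\<exists>x\<in>{x\<in>I. odd x \<and> d \<le> x}. \<forall>k. \<exists>n\<ge>k. (j n = jm \<and> odd (R n) \<and> R n \<ge> d) \<and> R n = x"
      using Cio regI finI by (intro pigeon) (auto simp: R_def)
    then have One: "Ob \<noteq> {}" unfolding Ob_def by blast
    have finO: "finite Ob" using finI unfolding Ob_def by auto
    define ov where "ov = Max Ob"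
    have oO: "ov \<in> Ob" using One finO ov_def by auto
    then have ov: "odd ov" "d \<le> ov" "ov \<in> I" "\<forall>k. \<exists>n\<ge>k. j n = jm \<and> R n = ov" unfolding Ob_def by auto
    have "\<forall>x\<in>{x\<in>I. ov < x}. \<exists>T. \<forall>n\<ge>T. \<not> (j n = jm \<and> odd (R n) \<and> R n = x)"
    proof
      fix x assume x: "x \<in> {x\<in>I. ov < x}"
      show "\<exists>T. \<forall>n\<ge>T. \<not> (j n = jm \<and> odd (R n) \<and> R n = x)"
      proof (cases "odd x")
        case True
        then have "x \<notin> Ob" using x finO ov_def Max_ge by fastforce
        then have "\<not> (\<forall>k. \<exists>n\<ge>k. j n = jm \<and> R n = x)" using x True ov unfolding Ob_def by auto
        then show ?thesis by (metis leI)
      qed auto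
    qed
    from fin_ev[OF _ this] finI obtain T2 where
      T2': "\<forall>x\<in>{x\<in>I. ov < x}. \<forall>n\<ge>T2. \<not> (j n = jm \<and> odd (R n) \<and> R n = x)" by auto
    have T2: "n \<ge> T2 \<Longrightarrow> j n = jm \<Longrightarrow> odd (R n) \<Longrightarrow> R n \<le> ov" for n
      using T2' regI[of n jm] unfolding R_def by (metis (mono_tags, lifting) mem_Collect_eq not_le)
    define T3 where "T3 = max T2 (Suc t1)"
    have ipo: "ip n \<le> ov" if th: "n \<ge> T3" "j n = jm" for n
    proof (rule ccontr)
      assume "\<not> ip n \<le> ov"
      then have gt: "ip n > ov" by auto
      have nT: "n \<ge> T" "n \<ge> T0" using that T3_def t1 T0_def by auto
      have "odd (ip n)" using gt ov ipsmall[OF nT(1)] by auto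
      then obtain m where "m \<ge> Suc n" "j m = jm" "odd (R m)" "R m \<ge> ip n"
        using propag[of "Suc n" "ip n"] RS_eq[OF th(2)] nT gt ov by auto
      moreover have "m \<ge> T2" using \<open>m \<ge> Suc n\<close> th T3_def by auto
      ultimately show False using T2[of m] gt by auto
    qed
    define C where "C n = cnt (cf n) (ov, jm)" for n
    have C1: "C (Suc n) = C n" if "n \<ge> T3" "j n \<noteq> jm" for n
    proof -
      have "j n \<le> jm" using jT that T3_def t1 T0_def by auto
      then show ?thesis using that unfolding C_def by (auto simp: cntS)
    qed
    have C2: "C (Suc n) = C n" if "n \<ge> T3" "j n = jm" "R n \<noteq> ov" for n
      using that ipo[OF that(1,2)] unfolding C_def R_def by (auto simp: cntS)
    have C3: "C (Suc n) = C n + 1" if "n \<ge> T3" "j n = jm" "R n = ov" "C n \<noteq> N" for n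
      using that ipo[OF that(1,2)] ov jm0 unfolding C_def R_def by (auto simp: cntS)
    have Nio: "\<forall>k. \<exists>n\<ge>k. j n = jm \<and> R n = ov \<and> C n = N"
    proof (rule ccontr)
      assume "\<not> ?thesis"
      then obtain T4 where T4: "\<forall>n\<ge>T4. \<not> (j n = jm \<and> R n = ov \<and> C n = N)" by (metis leI)
      define T5 where "T5 = max T3 T4"
      have mono1: "C n \<le> C (Suc n)" if "n \<ge> T5" for n
        using C1[of n] C2[of n] C3[of n] T4 that T5_def by (cases "j n = jm"; cases "R n = ov") auto
      have mono: "C n \<le> C m" if "T5 \<le> n" "n \<le> m" for n m
        using that(2)
      proof (induction m rule: dec_induct)
        case (step m) then show ?case using mono1[of m] that by auto
      qed auto
      have "\<exists>n\<ge>T5. C n \<ge> k" for k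
      proof (induction k)
        case 0 then show ?case by auto
      next
        case (Suc k)
        then obtain n where n: "n \<ge> T5" "C n \<ge> k" by auto
        obtain m where m: "m \<ge> n" "j m = jm" "R m = ov" using ov by blast
        have "C (Suc m) = C m + 1" using C3[of m] T4 m n T5_def by auto
        then show ?case using mono[OF n(1) m(1)] n m by (intro exI[of _ "Suc m"]) auto
      qed
      then obtain n where "C n \<ge> Suc N" by blast
      then show False using cntle[of n "(ov, jm)"] unfolding C_def by linarith
    qed
    have "limsup (\<lambda>n. enat (out N (cf n) (j n))) = enat (2 * jm + 1)"
    proof (rule limsup_char[where T=T'])
      show "\<forall>n\<ge>T'. out N (cf n) (j n) \<le> 2 * jm + 1" using jT by (auto simp: out_def)
      show "\<forall>k. \<exists>n\<ge>k. out N (cf n) (j n) = 2 * jm + 1"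
        using Nio ov jm0 unfolding C_def R_def by (auto simp: out_def)
    qed
    then show ?thesis unfolding parity_accepting_def by auto
  qed
qed


theorem lemma2:
  fixes V :: "'v set" and E :: "('v \<times> 'v) set" and L :: "'v \<times> 'v \<Rightarrow> nat"
    and I J :: "nat set" and p0 :: 'v and N :: nat
  assumes "parity_graph V E L I"
    and "p0 \<in> V"
    and "\<not> even_graph E L p0"
    and "is_index J"
    and "Min J \<in> {1, 2}"
  shows "adam_wins I J N E L p0"
proof -
  have PG: "finite I" "I \<noteq> {}" "\<forall>e\<in>E. L e \<in> I" using assms(1) by (auto simp: parity_graph_def is_index_def)
  have finJ: "finite J" using assms(4) by (auto simp: is_index_def)
  obtain \<rho> where rho: "\<rho> 0 = p0" "\<And>n. (\<rho> n, \<rho> (Suc n)) \<in> E"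
    and nacc: "\<not> parity_accepting (\<lambda>n. L (\<rho> n, \<rho> (Suc n)))"
    using assms(3) unfolding even_graph_def infinite_path_from_def by blast
  have "\<forall>n. L (\<rho> n, \<rho> (Suc n)) \<in> I" using rho PG by auto
  from max_io[OF PG(1) this] obtain d T where dT: "\<forall>n\<ge>T. L (\<rho> n, \<rho> (Suc n)) \<le> d"
    and dio: "\<forall>k. \<exists>n\<ge>k. L (\<rho> n, \<rho> (Suc n)) = d" by blast
  have "limsup (\<lambda>n. enat (L (\<rho> n, \<rho> (Suc n)))) = enat d" using limsup_char[OF dT dio] .
  then have dodd: "odd d" using nacc unfolding parity_accepting_def by auto
  define sa :: "'v adam_strategy" where "sa h = (\<rho> (length h), \<rho> (Suc (length h)))" for h
  show ?thesis unfolding adam_wins_def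
  proof (intro exI[of _ sa] allI)
    fix se :: "'v eve_strategy"
    define cf where "cf n = conf_after I N L p0 (hist sa se n)" for n
    define e where "e n = fst (play_round sa se n)" for n
    define j where "j n = fst (snd (play_round sa se n))" for n
    define i where "i n = snd (snd (play_round sa se n))" for n
    have len: "length (hist sa se n) = n" for n by (induction n) auto
    have pr: "play_round sa se n = (e n, j n, i n)" for n unfolding e_def j_def i_def by simp
    have en: "e n = (\<rho> n, \<rho> (Suc n))" for n
      unfolding e_def play_round_def next_round_def by (simp add: Let_def sa_def len)
    have stp: "cf (Suc n) = step N L (cf n) (e n, j n, i n)" for n
      unfolding cf_def conf_after_def by (simp add: pr[symmetric] play_round_def)
    have vert: "vert (cf n) = \<rho> n" for n
    proof (induction n)
      case 0 then show ?case using rho by (simp add: cf_def conf_after_def init_config_def)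
    next
      case (Suc n) then show ?case by (simp add: stp vert_step en)
    qed
    have "adam_plays_legally I N E L p0 sa se"
      unfolding adam_plays_legally_def adam_legal_def
      using pr en vert rho(2) cf_def by (metis fst_conv)
    moreover have "\<not> eve_wins_play I J N L p0 sa se"
    proof
      assume W: "eve_wins_play I J N L p0 sa se"
      have legal: "eve_legal I J L (e n) (j n) (i n)" for n
        using W pr[of n] unfolding eve_wins_play_def by (metis (no_types, lifting) case_prod_conv)
      have acc: "parity_accepting (\<lambda>n. out N (cf n) (j n))"
        using W unfolding eve_wins_play_def by (simp add: pr cf_def)
      have init: "reg (cf 0) = (\<lambda>_. Min I)" "cnt (cf 0) = (\<lambda>_. 0)"
        by (simp_all add: cf_def conf_after_def init_config_def)
      have Le: "L (e n) \<in> I" for n using en rho(2) PG by auto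
      have "\<not> parity_accepting (\<lambda>n. out N (cf n) (j n))"
        apply (rule core[OF stp init PG(1,2) Le legal finJ dodd])
        using dT dio en by auto
      then show False using acc by simp
    qed
    ultimately show "adam_plays_legally I N E L p0 sa se \<and> \<not> eve_wins_play I J N L p0 sa se" by blast
  qed
qed

end
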